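(* Let $\mathcal{X}\subseteq\mathbb{R}^n$ be compact and convex. The following are equivalent: (i) $\mathcal{X}$ is standard comonotone; (ii) for all $v\in\mathbb{R}^n$ and all $i,j\in[n]$ with $v_i=v_j$, there exists $x^*\in\arg\max\{v^\top x: x\in\mathcal{X}\}$ with $x^*_i=x^*_j$; (iii) for all $v\in\mathbb{R}^n$, there exists $x^*\in\arg\max\{v^\top x: x\in\mathcal{X}\}$ such that for all $i,j\in[n]$, $v_i=v_j$ implies $x^*_i=x^*_j$.
   Context: $\Pi_n$ is the set of permutations of $[n]$; for $\pi\in\Pi_n$, $\mathcal{Z}(\pi)=\{x\in\mathbb{R}^n: x_{\pi(1)}\ge\cdots\ge x_{\pi(n)}\}$. A set $\mathcal{X}\subseteq\mathbb{R}^n$ is standard comonotone if for every $\pi\in\Pi_n$ and every $v\in\mathcal{Z}(\pi)$, whenever $\max_{x\in\mathcal{X}}v^\top x$ attains its optimum, it has an optimal solution in $\mathcal{Z}(\pi)$. *)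

theory Defs
  imports "HOL-Analysis.Analysis"
begin

text \<open>Vectors in R^n are modelled as real^'n, with coordinate index type 'n (CARD('n) = n).
A permutation pi of [n] is modelled as a bijection from {..<CARD('n)} (positions 1..n
shifted to 0..n-1) onto the index type; Z(pi) is the set of vectors whose coordinates are
non-increasing along pi.\<close>

definition perm_orderings :: "(nat \<Rightarrow> 'n::finite) set" where
  "perm_orderings = {p. bij_betw p {..<CARD('n)} UNIV}"

definition Zcone :: "(nat \<Rightarrow> 'n::finite) \<Rightarrow> (real^'n) set" where
  "Zcone p = {x. \<forall>k l. k \<le> l \<longrightarrow> l < CARD('n) \<longrightarrow> x $ p l \<le> x $ p k}"

definition argmax_set :: "(real^'n::finite) set \<Rightarrow> real^'n \<Rightarrow> (real^'n) set" where
  "argmax_set X v = {x \<in> X. \<forall>y\<in>X. v \<bullet> y \<le> v \<bullet> x}"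

definition standard_comonotone :: "(real^'n::finite) set \<Rightarrow> bool" where
  "standard_comonotone X \<longleftrightarrow>
     (\<forall>p\<in>perm_orderings. \<forall>v\<in>Zcone p.
        argmax_set X v \<noteq> {} \<longrightarrow> argmax_set X v \<inter> Zcone p \<noteq> {})"

end

theory Submission
  imports Defs
begin


lemma argmax_ne:
  fixes X :: "(real^'n::finite) set"
  assumes "compact X" "X \<noteq> {}"
  shows "argmax_set X v \<noteq> {}"
proof -
  have "continuous_on X (\<lambda>x. v \<bullet> x)" by (intro continuous_intros)
  from continuous_attains_sup[OF assms this] obtain x where "x\<in>X" "\<forall>y\<in>X. v \<bullet> y \<le> v \<bullet> x" by blast
  then show ?thesis unfolding argmax_set_def by blast
qed

lemma argmax_convex:
  fixes X :: "(real^'n::finite) set"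
  assumes "convex X"
  shows "convex (argmax_set X v)"
  unfolding convex_def argmax_set_def
proof (intro ballI allI impI, safe)
  fix x y u w and z assume xy: "x \<in> X" "\<forall>y\<in>X. v \<bullet> y \<le> v \<bullet> x" "y \<in> X" "\<forall>z\<in>X. v \<bullet> z \<le> v \<bullet> y"
    and uw: "0 \<le> (u::real)" "0 \<le> w" "u + w = 1"
  show "u *\<^sub>R x + w *\<^sub>R y \<in> X" using assms xy uw unfolding convex_def by blast
  assume "z \<in> X"
  then have "v \<bullet> z \<le> v \<bullet> x" "v \<bullet> z \<le> v \<bullet> y" using xy by auto
  then have "u * (v \<bullet> z) + w * (v \<bullet> z) \<le> u * (v \<bullet> x) + w * (v \<bullet> y)"
    using uw by (intro add_mono mult_left_mono) auto
  then show "v \<bullet> z \<le> v \<bullet> (u *\<^sub>R x + w *\<^sub>R y)" using uw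
    by (simp add: inner_add_right algebra_simps) (metis distrib_right mult_1 )
qed

lemma argmax_closed:
  fixes X :: "(real^'n::finite) set"
  assumes "closed X"
  shows "closed (argmax_set X v)"
proof -
  have "argmax_set X v = X \<inter> (\<Inter>y\<in>X. {x. v \<bullet> y \<le> v \<bullet> x})" unfolding argmax_set_def by auto
  moreover have "closed (\<Inter>y\<in>X. {x. v \<bullet> y \<le> v \<bullet> x})"
    by (intro closed_INT ballI closed_Collect_le continuous_intros)
  ultimately show ?thesis using assms by auto
qed

lemma lemA:
  fixes X :: "(real^'n::finite) set"
  assumes P2: "\<forall>v i j. v $ i = v $ j \<longrightarrow> (\<exists>x\<in>argmax_set X v. x $ i = x $ j)"
    and lt: "v $ j < v $ i" and x: "x \<in> argmax_set X v"
  shows "x $ j \<le> x $ i"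
proof -
  have ij: "i \<noteq> j" using lt by auto
  define s where "s = (v $ i - v $ j) / 2"
  define d :: "real^'n" where "d = axis i 1 - axis j 1"
  define w where "w = v - s *\<^sub>R d"
  have dz: "d \<bullet> z = z $ i - z $ j" for z
    unfolding d_def by (simp add: inner_diff_left inner_axis')
  have vw: "v \<bullet> z = w \<bullet> z + s * (z $ i - z $ j)" for z
    unfolding w_def by (simp add: inner_diff_left dz)
  have "w $ i = w $ j" unfolding w_def d_def s_def using ij by (simp add: axis_def field_simps)
  then obtain y where y: "y \<in> argmax_set X w" "y $ i = y $ j" using P2 by blast
  have xX: "x \<in> X" and yX: "y \<in> X" using x y unfolding argmax_set_def by auto
  have "w \<bullet> x \<le> w \<bullet> y" using y xX unfolding argmax_set_def by auto
  moreover have "v \<bullet> y \<le> v \<bullet> x" using x yX unfolding argmax_set_def by auto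
  moreover have "s * (y $ i - y $ j) = 0" using y(2) by simp
  ultimately have "0 \<le> s * (x $ i - x $ j)" using vw[of x] vw[of y] by linarith
  moreover have "s > 0" using lt s_def by auto
  ultimately show ?thesis by (simp add: zero_le_mult_iff)
qed

lemma lemL:
  fixes X :: "(real^'n::finite) set"
  assumes "compact X" "closed C"
    and ex: "\<forall>m::nat. \<exists>z\<in>argmax_set X (v + inverse (real (Suc m)) *\<^sub>R u) \<inter> C. True"
  shows "\<exists>z\<in>argmax_set X v. z \<in> C"
proof -
  from ex obtain f where f: "\<And>m. f m \<in> argmax_set X (v + inverse (real (Suc m)) *\<^sub>R u) \<inter> C"
    by metis
  have fX: "\<forall>m. f m \<in> X \<inter> C" using f unfolding argmax_set_def by auto
  have "compact (X \<inter> C)" using assms by (simp add: compact_Int_closed)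
  then obtain l r where l: "l \<in> X \<inter> C" "strict_mono r" "(f \<circ> r) \<longlonglongrightarrow> l"
    using seq_compactE[OF compact_imp_seq_compact fX] by blast
  have e: "(\<lambda>m. inverse (real (Suc (r m)))) \<longlonglongrightarrow> 0"
    using LIMSEQ_subseq_LIMSEQ[OF LIMSEQ_inverse_real_of_nat l(2)] by (simp add: o_def)
  have "v \<bullet> y \<le> v \<bullet> l" if yX: "y \<in> X" for y
  proof -
    have t1: "(\<lambda>m. (v + inverse (real (Suc (r m))) *\<^sub>R u) \<bullet> f (r m)) \<longlonglongrightarrow> (v + 0 *\<^sub>R u) \<bullet> l"
      using l(3) e by (intro tendsto_intros) (auto simp: o_def)
    have t2: "(\<lambda>m. (v + inverse (real (Suc (r m))) *\<^sub>R u) \<bullet> y) \<longlonglongrightarrow> (v + 0 *\<^sub>R u) \<bullet> y"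
      using e by (intro tendsto_intros) auto
    have "(v + 0 *\<^sub>R u) \<bullet> y \<le> (v + 0 *\<^sub>R u) \<bullet> l"
      by (rule LIMSEQ_le[OF t2 t1]) (use f yX in \<open>auto simp: argmax_set_def\<close>)
    then show ?thesis by simp
  qed
  then show ?thesis using l(1) unfolding argmax_set_def by auto
qed


lemma sort_perm:
  fixes v :: "real^'n::finite"
  shows "\<exists>p\<in>perm_orderings. v \<in> Zcone p"
proof -
  obtain xs where xs: "distinct xs" "set xs = (UNIV::'n set)"
    using finite_distinct_list[of "UNIV::'n set"] by auto
  define ys where "ys = sort_key (\<lambda>k. - v$k) xs"
  have d: "distinct ys" "set ys = UNIV" using xs unfolding ys_def by auto
  have len: "length ys = CARD('n)" using distinct_card[OF d(1)] d(2) by simp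
  have "bij_betw ((!) ys) {..<CARD('n)} UNIV"
    by (rule bij_betw_nth) (use d len in auto)
  moreover have "v \<in> Zcone ((!) ys)"
    unfolding Zcone_def
  proof (intro CollectI allI impI)
    fix k l assume kl: "k \<le> l" "l < CARD('n)"
    have "sorted (map (\<lambda>k. - v$k) ys)" unfolding ys_def by simp
    from sorted_nth_mono[OF this kl(1)] kl len
    show "v $ (ys ! l) \<le> v $ (ys ! k)" by simp
  qed
  ultimately show ?thesis unfolding perm_orderings_def by blast
qed

lemma perm_ij:
  fixes v :: "real^'n::finite"
  assumes "v $ i = v $ j" "i \<noteq> j"
  shows "\<exists>p\<in>perm_orderings. v \<in> Zcone p \<and> (\<exists>k l. k < l \<and> l < CARD('n) \<and> p k = i \<and> p l = j)"
proof -
  obtain p0 where p0: "bij_betw p0 {..<CARD('n)} UNIV" "v \<in> Zcone p0"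
    using sort_perm[of v] unfolding perm_orderings_def by blast
  obtain k0 where k0: "k0 < CARD('n)" "p0 k0 = i" using p0(1) unfolding bij_betw_def
    by (metis UNIV_I imageE lessThan_iff)
  obtain l0 where l0: "l0 < CARD('n)" "p0 l0 = j" using p0(1) unfolding bij_betw_def
    by (metis UNIV_I imageE lessThan_iff)
  have "k0 \<noteq> l0" using k0 l0 assms by auto
  show ?thesis
  proof (cases "k0 < l0")
    case True
    have "\<exists>k l. k < l \<and> l < CARD('n) \<and> p0 k = i \<and> p0 l = j" using True k0 l0 by blast
    moreover have "p0 \<in> perm_orderings" using p0(1) unfolding perm_orderings_def by simp
    ultimately show ?thesis using p0(2) by blast
  next
    case False
    then have lk: "l0 < k0" using \<open>k0 \<noteq> l0\<close> by auto
    define g where "g x = (if x = i then j else if x = j then i else x)" for x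
    have "g \<circ> g = id" unfolding g_def by (auto simp: fun_eq_iff)
    then have "bij g" using o_bij by blast
    then have b: "bij_betw (g \<circ> p0) {..<CARD('n)} UNIV"
      using bij_betw_trans[OF p0(1)] by blast
    have gv: "v $ g x = v $ x" for x unfolding g_def using assms by auto
    have "v \<in> Zcone (g \<circ> p0)" using p0(2) unfolding Zcone_def by (simp add: gv)
    moreover have "(g \<circ> p0) l0 = i" "(g \<circ> p0) k0 = j" using k0 l0 assms unfolding g_def by auto
    moreover have "\<exists>k l. k < l \<and> l < CARD('n) \<and> (g \<circ> p0) k = i \<and> (g \<circ> p0) l = j"
      using lk k0 calculation(2,3) by blast
    moreover have "g \<circ> p0 \<in> perm_orderings" using b unfolding perm_orderings_def by simp
    ultimately show ?thesis by blast
  qed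
qed


lemma two_three:
  fixes X :: "(real^'n::finite) set"
  assumes cX: "compact X" and cvX: "convex X" and ne: "X \<noteq> {}"
    and P2: "\<forall>v i j. v $ i = v $ j \<longrightarrow> (\<exists>x\<in>argmax_set X v. x $ i = x $ j)"
  shows "\<exists>x\<in>argmax_set X v. \<forall>i j. v $ i = v $ j \<longrightarrow> x $ i = x $ j"
proof (rule ccontr)
  assume nc: "\<not> ?thesis"
  define Y where "Y = argmax_set X v"
  define S where "S = {x::real^'n. \<forall>i j. v $ i = v $ j \<longrightarrow> x $ i = x $ j}"
  have SY: "S \<inter> Y = {}"
  proof (rule equals0I)
    fix x assume xSY: "x \<in> S \<inter> Y"
    then have x1: "x \<in> argmax_set X v" unfolding Y_def by blast
    from xSY have x2: "\<forall>i j. v $ i = v $ j \<longrightarrow> x $ i = x $ j"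
      unfolding S_def by blast
    have "\<exists>x\<in>argmax_set X v. \<forall>i j. v $ i = v $ j \<longrightarrow> x $ i = x $ j"
      using x1 x2 by blast
    with nc show False by (rule notE)
  qed
  have sub: "subspace S"
    unfolding subspace_def
  proof (intro conjI ballI allI)
    show "0 \<in> S" unfolding S_def by simp
  next
    fix x y assume x: "x \<in> S" and y: "y \<in> S"
    show "x + y \<in> S" unfolding S_def
    proof (intro CollectI allI impI)
      fix i j assume e: "v $ i = v $ j"
      have "x $ i = x $ j" "y $ i = y $ j" using x y e unfolding S_def by blast+
      then show "(x + y) $ i = (x + y) $ j" by simp
    qed
  next
    fix c :: real and x assume x: "x \<in> S"
    show "c *\<^sub>R x \<in> S" unfolding S_def
    proof (intro CollectI allI impI)
      fix i j assume e: "v $ i = v $ j"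
      have "x $ i = x $ j" using x e unfolding S_def by blast
      then show "(c *\<^sub>R x) $ i = (c *\<^sub>R x) $ j" by simp
    qed
  qed
  have Yc: "compact Y"
  proof -
    have "closed Y" unfolding Y_def using argmax_closed compact_imp_closed[OF cX] by blast
    moreover have "Y = X \<inter> Y" unfolding Y_def argmax_set_def by auto
    ultimately show ?thesis using compact_Int_closed[OF cX] by metis
  qed
  obtain a b where ab: "\<forall>x\<in>S. a \<bullet> x < b" "\<forall>x\<in>Y. a \<bullet> x > b"
    using separating_hyperplane_closed_compact[OF subspace_imp_convex[OF sub] closed_subspace[OF sub]
        argmax_convex[OF cvX] Yc[unfolded Y_def] argmax_ne[OF cX ne] SY[unfolded Y_def]]
    unfolding Y_def by blast
  have b0: "0 < b" using ab(1) subspace_0[OF sub] by force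
  have a0: "a \<bullet> s = 0" if "s \<in> S" for s
  proof (rule ccontr)
    assume nz: "a \<bullet> s \<noteq> 0"
    define t where "t = (b + 1) / (a \<bullet> s)"
    have "t *\<^sub>R s \<in> S" using that sub by (simp add: subspace_scale)
    then have "a \<bullet> (t *\<^sub>R s) < b" using ab(1) by blast
    moreover have "a \<bullet> (t *\<^sub>R s) = b + 1" using nz unfolding t_def by simp
    ultimately show False by simp
  qed
  define C where "C = {z::real^'n. \<forall>k l. v$k = v$l \<and> a$k < a$l \<longrightarrow> z$l \<le> z$k}"
  have Ccl: "closed C"
  proof -
    have "C = (\<Inter>kl\<in>{(k,l). v$k = v$l \<and> a$k < a$l}. {z. z $ snd kl \<le> z $ fst kl})"
      unfolding C_def by auto
    moreover have "closed (\<Inter>kl\<in>{(k,l). v$k = v$l \<and> a$k < a$l}. {z::real^'n. z $ snd kl \<le> z $ fst kl})"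
      by (intro closed_INT ballI closed_Collect_le continuous_intros)
    ultimately show ?thesis by simp
  qed
  have "\<forall>m::nat. \<exists>z\<in>argmax_set X (v + inverse (real (Suc m)) *\<^sub>R (-a)) \<inter> C. True"
  proof
    fix m :: nat
    define e where "e = inverse (real (Suc m))"
    have e0: "e > 0" unfolding e_def by simp
    obtain z where z: "z \<in> argmax_set X (v + e *\<^sub>R (-a))" using argmax_ne[OF cX ne] by blast
    have "z \<in> C" unfolding C_def
    proof (intro CollectI allI impI)
      fix k l assume kl: "v$k = v$l \<and> a$k < a$l"
      have "(v + e *\<^sub>R (-a)) $ l < (v + e *\<^sub>R (-a)) $ k" using kl e0 by simp
      from lemA[OF P2 this z] show "z$l \<le> z$k" .
    qed
    then show "\<exists>z\<in>argmax_set X (v + inverse (real (Suc m)) *\<^sub>R (-a)) \<inter> C. True"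
      using z unfolding e_def by blast
  qed
  from lemL[OF cX Ccl this] obtain z where z: "z \<in> Y" "z \<in> C" unfolding Y_def by blast
  have pos: "a \<bullet> z > 0" using ab(2) z(1) b0 by force
  define s :: "real^'n" where "s = (\<chi> k. Max ((\<lambda>l. z$l) ` {l. v$l = v$k \<and> a$l > 0} \<union> {Min ((\<lambda>l. z$l) ` {l. v$l = v$k})}))"
  have "s \<in> S" unfolding S_def s_def by auto
  then have "a \<bullet> s = 0" by (rule a0)
  then have eq: "a \<bullet> z = (\<Sum>k\<in>UNIV. a$k * (z$k - s$k))"
    by (simp add: inner_vec_def sum_subtractf right_diff_distrib)
  have "a$k * (z$k - s$k) \<le> 0" for k
  proof (cases "a$k > 0")
    case True
    have "z$k \<le> s$k" unfolding s_def using True by (auto intro!: Max_ge)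
    then show ?thesis using True by (simp add: mult_nonneg_nonpos)
  next
    case False
    show ?thesis
    proof (cases "a$k < 0")
      case True
      have "s$k \<le> z$k" unfolding s_def vec_lambda_beta
      proof (rule Max.boundedI)
        show "finite ((\<lambda>l. z$l) ` {l. v$l = v$k \<and> a$l > 0} \<union> {Min ((\<lambda>l. z$l) ` {l. v$l = v$k})})" by simp
      next
        show "(\<lambda>l. z$l) ` {l. v$l = v$k \<and> a$l > 0} \<union> {Min ((\<lambda>l. z$l) ` {l. v$l = v$k})} \<noteq> {}" by simp
      next
        fix y assume "y \<in> (\<lambda>l. z$l) ` {l. v$l = v$k \<and> a$l > 0} \<union> {Min ((\<lambda>l. z$l) ` {l. v$l = v$k})}"
        then show "y \<le> z$k"
        proof
          assume "y \<in> (\<lambda>l. z$l) ` {l. v$l = v$k \<and> a$l > 0}"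
          then obtain l where "y = z$l" "v$l = v$k" "a$l > 0" by auto
          then show ?thesis using z(2) True unfolding C_def by force
        next
          assume "y \<in> {Min ((\<lambda>l. z$l) ` {l. v$l = v$k})}"
          then show ?thesis by (auto intro!: Min_le)
        qed
      qed
      then show ?thesis using True by (simp add: mult_nonpos_nonneg)
    next
      case False
      then show ?thesis using \<open>\<not> a$k > 0\<close> by simp
    qed
  qed
  then have "a \<bullet> z \<le> 0" unfolding eq by (simp add: sum_nonpos)
  then show False using pos by simp
qed


theorem theorem3:
  fixes X :: "(real^'n::finite) set"
  assumes "compact X" and "convex X" and "X \<noteq> {}"
  shows "(standard_comonotone X \<longleftrightarrow>
           (\<forall>v i j. v $ i = v $ j \<longrightarrow> (\<exists>x\<in>argmax_set X v. x $ i = x $ j)))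
       \<and> (standard_comonotone X \<longleftrightarrow>
           (\<forall>v. \<exists>x\<in>argmax_set X v. \<forall>i j. v $ i = v $ j \<longrightarrow> x $ i = x $ j))"
proof -
  let ?P1 = "standard_comonotone X"
  let ?P2 = "\<forall>v i j. v $ i = v $ j \<longrightarrow> (\<exists>x\<in>argmax_set X v. x $ i = x $ j)"
  let ?P3 = "\<forall>v. \<exists>x\<in>argmax_set X v. \<forall>i j. v $ i = v $ j \<longrightarrow> x $ i = x $ j"
  have 12: ?P2 if P1: ?P1
  proof (intro allI impI)
    fix v :: "real^'n" and i j assume e: "v $ i = v $ j"
    show "\<exists>x\<in>argmax_set X v. x $ i = x $ j"
    proof (cases "i = j")
      case True
      then show ?thesis using argmax_ne[OF assms(1,3)] by blast
    next
      case False
      have gen: "\<exists>x\<in>argmax_set X v. x $ j' \<le> x $ i'" if h: "v $ i' = v $ j'" "i' \<noteq> j'" for i' j'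
      proof -
        obtain p k l where p: "p \<in> perm_orderings" "v \<in> Zcone p" "k < l" "l < CARD('n)" "p k = i'" "p l = j'"
          using perm_ij[OF h] by blast
        obtain x where x: "x \<in> argmax_set X v" "x \<in> Zcone p"
          using P1 p(1,2) argmax_ne[OF assms(1,3)] unfolding standard_comonotone_def by blast
        have "x $ p l \<le> x $ p k" using x(2) p(3,4) unfolding Zcone_def by auto
        then show ?thesis using x(1) p(5,6) by auto
      qed
      obtain x1 where x1: "x1 \<in> argmax_set X v" "x1 $ j \<le> x1 $ i" using gen[OF e False] by blast
      obtain x2 where x2: "x2 \<in> argmax_set X v" "x2 $ i \<le> x2 $ j" using gen[OF e[symmetric]] False by metis
      define d1 where "d1 = x1 $ i - x1 $ j"
      define d2 where "d2 = x2 $ i - x2 $ j"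
      show ?thesis
      proof (cases "d1 = 0")
        case True
        then show ?thesis using x1 unfolding d1_def by auto
      next
        case False
        have d1: "d1 > 0" using False x1(2) unfolding d1_def by auto
        have d2: "d2 \<le> 0" using x2(2) unfolding d2_def by auto
        define t where "t = d1 / (d1 - d2)"
        have t: "0 \<le> t" "t \<le> 1" using d1 d2 unfolding t_def by (auto simp: divide_simps)
        define x where "x = (1 - t) *\<^sub>R x1 + t *\<^sub>R x2"
        have "x \<in> argmax_set X v"
          using argmax_convex[OF assms(2), of v] x1(1) x2(1) t unfolding x_def convex_def
          by (meson diff_ge_0_iff_ge diff_add_cancel)
        moreover have "x $ i - x $ j = (1 - t) * d1 + t * d2"
          unfolding x_def d1_def d2_def by (simp add: algebra_simps)
        moreover have "(1 - t) * d1 + t * d2 = 0"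
          using d1 d2 unfolding t_def by (simp add: field_simps)
        ultimately show ?thesis by auto
      qed
    qed
  qed
  have 23: ?P3 if ?P2 using two_three[OF assms that] by blast
  have 32: ?P2 if P3: ?P3
  proof (intro allI impI)
    fix v :: "real^'n" and i j assume e: "v $ i = v $ j"
    obtain x where "x \<in> argmax_set X v" "\<forall>i j. v $ i = v $ j \<longrightarrow> x $ i = x $ j" using P3 by blast
    then show "\<exists>x\<in>argmax_set X v. x $ i = x $ j" using e by blast
  qed
  have 31: ?P1 if P3: ?P3
    unfolding standard_comonotone_def
  proof (intro ballI impI)
    fix p :: "nat \<Rightarrow> 'n" and v :: "real^'n" assume p: "p \<in> perm_orderings" and vz: "v \<in> Zcone p"
    obtain x where x: "x \<in> argmax_set X v" and xe: "\<forall>i j. v $ i = v $ j \<longrightarrow> x $ i = x $ j" using P3 by blast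
    have P2: ?P2 using 32[OF P3] .
    have "x \<in> Zcone p" unfolding Zcone_def
    proof (intro CollectI allI impI)
      fix k l :: nat assume kl: "k \<le> l" "l < CARD('n)"
      have vle: "v $ p l \<le> v $ p k" using vz kl unfolding Zcone_def by blast
      show "x $ p l \<le> x $ p k"
      proof (cases "v $ p l = v $ p k")
        case True
        then have "x $ p l = x $ p k" using xe by blast
        then show ?thesis by simp
      next
        case False
        then have "v $ p l < v $ p k" using vle by simp
        from lemA[OF P2 this x] show ?thesis .
      qed
    qed
    then show "argmax_set X v \<inter> Zcone p \<noteq> {}" using x by blast
  qed
  show ?thesis using 12 23 31 32 by blast
qed

end
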